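(* Let $K$ be a field. The characteristic function $\mathbb Z^k\to K$ of a polyhedral region in $\mathbb Z^k$ is a hypergeometric term on $\mathbb Z^k$.
   Context: A half-space is $\{\vec z\in\mathbb Z^k:\vec v\cdot\vec z>n\}$ with $\vec v\in\mathbb Z^k$, $n\in\mathbb Z$. A polyhedral region is either $\mathbb Z^k$ or an intersection of finitely many half-spaces. A hypergeometric term on $\mathbb Z^k$ over $K$ is a function $f\colon\mathbb Z^k\to K$ such that for each $i\in\{1,\dots,k\}$ there are nonzero polynomials $A_i,B_i\in K[\vec z]$ with $A_i(\vec z)f(\vec z)=B_i(\vec z)f(\vec z+\vec e_i)$ for all $\vec z\in\mathbb Z^k$. *)

theory Defs
  imports "HOL-Analysis.Analysis" "HOL-Library.Poly_Mapping"
begin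

text \<open>Z^k is modelled as int ^ 'k for a finite index type 'k (k = CARD('k)).\<close>

type_synonym ('k, 'a) mpoly_fs = "('k \<Rightarrow>\<^sub>0 nat) \<Rightarrow>\<^sub>0 'a"

definition mpoly_eval :: "('k::finite, 'a::field) mpoly_fs \<Rightarrow> int ^ 'k \<Rightarrow> 'a" where
  "mpoly_eval p z = (\<Sum>m\<in>Poly_Mapping.keys p. Poly_Mapping.lookup p m * (\<Prod>i\<in>UNIV. (of_int (z $ i)) ^ Poly_Mapping.lookup (m :: 'k \<Rightarrow>\<^sub>0 nat) i))"

definition int_dot :: "int ^ 'k::finite \<Rightarrow> int ^ 'k \<Rightarrow> int" where
  "int_dot v z = (\<Sum>i\<in>UNIV. v $ i * z $ i)"

definition half_space :: "int ^ 'k::finite \<Rightarrow> int \<Rightarrow> (int ^ 'k) set" where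
  "half_space v n = {z. int_dot v z > n}"

definition polyhedral_region :: "(int ^ 'k::finite) set \<Rightarrow> bool" where
  "polyhedral_region R \<longleftrightarrow> R = UNIV \<or>
     (\<exists>H. finite H \<and> R = (\<Inter>(v, n)\<in>H. half_space v n))"

definition unit_vec :: "'k::finite \<Rightarrow> int ^ 'k" where
  "unit_vec i = axis i 1"

definition hypergeometric_term :: "(int ^ 'k::finite \<Rightarrow> 'a::field) \<Rightarrow> bool" where
  "hypergeometric_term f \<longleftrightarrow>
     (\<forall>i. \<exists>A B :: ('k, 'a) mpoly_fs. A \<noteq> 0 \<and> B \<noteq> 0 \<and>
        (\<forall>z. mpoly_eval A z * f z = mpoly_eval B z * f (z + unit_vec i)))"

definition char_fun :: "(int ^ 'k::finite) set \<Rightarrow> int ^ 'k \<Rightarrow> 'a::field" where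
  "char_fun R z = (if z \<in> R then 1 else 0)"

end

theory Submission imports Defs "HOL-Computational_Algebra.Primes" begin

definition mono_ev :: "('k::finite \<Rightarrow>\<^sub>0 nat) \<Rightarrow> int ^ 'k \<Rightarrow> 'a::field" where
  "mono_ev m z = (\<Prod>i\<in>UNIV. (of_int (z $ i)) ^ Poly_Mapping.lookup m i)"

lemma eval_superset:
  assumes "finite S" "Poly_Mapping.keys p \<subseteq> S"
  shows "mpoly_eval p z = (\<Sum>m\<in>S. Poly_Mapping.lookup p m * mono_ev m z)"
  unfolding mpoly_eval_def mono_ev_def
  by (rule sum.mono_neutral_left) (use assms in \<open>auto simp: in_keys_iff\<close>)

lemma eval_add: "mpoly_eval (p + q) z = mpoly_eval p z + mpoly_eval q z"
proof -
  let ?S = "Poly_Mapping.keys p \<union> Poly_Mapping.keys q"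
  have "mpoly_eval (p+q) z = (\<Sum>m\<in>?S. Poly_Mapping.lookup (p+q) m * mono_ev m z)"
    by (rule eval_superset) (auto dest: subsetD[OF keys_add])
  also have "\<dots> = (\<Sum>m\<in>?S. Poly_Mapping.lookup p m * mono_ev m z) + (\<Sum>m\<in>?S. Poly_Mapping.lookup q m * mono_ev m z)"
    by (simp add: lookup_add distrib_right sum.distrib)
  also have "\<dots> = mpoly_eval p z + mpoly_eval q z"
    by (subst (1 2) eval_superset[of ?S]) auto
  finally show ?thesis .
qed

lemma eval_single: "mpoly_eval (Poly_Mapping.single m c) z = c * mono_ev m z"
  by (subst eval_superset[of "{m}"]) auto

lemma eval_0: "mpoly_eval 0 z = 0"
  by (simp add: mpoly_eval_def)

lemma eval_sum: "finite A \<Longrightarrow> mpoly_eval (sum f A) z = (\<Sum>a\<in>A. mpoly_eval (f a) z)"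
  by (induction A rule: finite_induct) (auto simp: eval_0 eval_add)

lemma pm_sum_single: "p = (\<Sum>m\<in>Poly_Mapping.keys p. Poly_Mapping.single m (Poly_Mapping.lookup p m))"
  by (rule poly_mapping_eqI) (simp add: lookup_sum lookup_single when_def in_keys_iff sum.delta')

lemma mono_add: "mono_ev (m + n) z = mono_ev m z * mono_ev n z"
  by (simp add: mono_ev_def lookup_add power_add prod.distrib)

lemma eval_mult: "mpoly_eval (p * q) z = mpoly_eval p z * mpoly_eval q z"
proof -
  have "p * q = (\<Sum>m\<in>Poly_Mapping.keys p. Poly_Mapping.single m (Poly_Mapping.lookup p m)) * (\<Sum>n\<in>Poly_Mapping.keys q. Poly_Mapping.single n (Poly_Mapping.lookup q n))"
    using pm_sum_single[of p] pm_sum_single[of q] by simp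
  also have "\<dots> = (\<Sum>m\<in>Poly_Mapping.keys p. \<Sum>n\<in>Poly_Mapping.keys q. Poly_Mapping.single (m+n) (Poly_Mapping.lookup p m * Poly_Mapping.lookup q n))"
    by (simp add: sum_product mult_single)
  finally have "mpoly_eval (p*q) z = (\<Sum>m\<in>Poly_Mapping.keys p. \<Sum>n\<in>Poly_Mapping.keys q. Poly_Mapping.lookup p m * Poly_Mapping.lookup q n * (mono_ev m z * mono_ev n z))"
    by (simp add: eval_sum eval_single mono_add)
  also have "\<dots> = mpoly_eval p z * mpoly_eval q z"
    by (subst (1 2) eval_superset[OF finite_keys order_refl]) (simp add: sum_product algebra_simps)
  finally show ?thesis .
qed

lemma eval_prod: "finite A \<Longrightarrow> mpoly_eval (prod f A) z = (\<Prod>a\<in>A. mpoly_eval (f a) z)"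
  by (induction A rule: finite_induct) (auto simp: eval_mult eval_single mono_ev_def simp flip: single_one)

lemma eval_uminus: "mpoly_eval (- p) z = - mpoly_eval p z"
proof -
  have "mpoly_eval p z + mpoly_eval (- p) z = 0" using eval_add[of p "-p" z] by (simp add: eval_0)
  thus ?thesis by (simp add: add_eq_0_iff)
qed

lemma eval_diff: "mpoly_eval (p - q) z = mpoly_eval p z - mpoly_eval q z"
  using eval_add[of p "-q" z] by (simp add: eval_uminus)

lemma mono_var: "mono_ev (Poly_Mapping.single j n) z = of_int (z $ j) ^ n"
proof -
  have "mono_ev (Poly_Mapping.single j n) z = (\<Prod>i\<in>UNIV. if i = j then of_int (z $ j) ^ n else 1)"
    unfolding mono_ev_def by (intro prod.cong) (auto simp: lookup_single)
  thus ?thesis by simp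
qed

lemma eval_one: "mpoly_eval (1 :: ('k::finite,'a::field) mpoly_fs) z = 1"
  by (simp add: eval_single mono_ev_def flip: single_one)

lemma frob_nat: "prime CHAR('a::field) \<Longrightarrow> (of_nat m :: 'a) ^ CHAR('a) = of_nat m"
proof (induction m)
  case 0 thus ?case using prime_gt_0_nat[of "CHAR('a)"] by (simp add: power_0_left)
next
  case (Suc m)
  have "(of_nat (Suc m) :: 'a) ^ CHAR('a) = (of_nat m + 1) ^ CHAR('a)" by (simp add: add.commute)
  also have "\<dots> = of_nat m ^ CHAR('a) + 1 ^ CHAR('a)"
    by (rule freshmans_dream) (use Suc in auto)
  finally show ?case using Suc by (simp add: add.commute)
qed

lemma frob_int: "prime CHAR('a::field) \<Longrightarrow> (of_int x :: 'a) ^ CHAR('a) = of_int x"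
proof (cases "x \<ge> 0")
  case True
  assume p: "prime CHAR('a)"
  have "(of_int x :: 'a) = of_nat (nat x)" using True by simp
  thus ?thesis using frob_nat[OF p] by simp
next
  case False
  assume p: "prime CHAR('a)"
  have "(of_int x :: 'a) = - of_nat (nat (-x))" using False by simp
  thus ?thesis using frob_nat[OF p] minus_power_prime_CHAR[OF refl p] by simp
qed

lemma int_dot_shift: "int_dot v (z + unit_vec i) = int_dot v z + v $ i"
proof -
  have "int_dot v (z + unit_vec i) = (\<Sum>j\<in>UNIV. v $ j * z $ j + (if j = i then v $ i else 0))"
    unfolding int_dot_def unit_vec_def by (intro sum.cong) (auto simp: axis_def algebra_simps)
  thus ?thesis by (simp add: sum.distrib int_dot_def)
qed

definition linf :: "int ^ 'k::finite \<Rightarrow> int \<Rightarrow> ('k, 'a::field) mpoly_fs" where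
  "linf v c = (\<Sum>j\<in>UNIV. Poly_Mapping.single (Poly_Mapping.single j 1) (of_int (v $ j))) - Poly_Mapping.single 0 (of_int c)"

lemma eval_linf: "mpoly_eval (linf v c :: ('k::finite, 'a::field) mpoly_fs) z = of_int (int_dot v z - c)"
proof -
  have e0: "mpoly_eval (Poly_Mapping.single 0 (of_int c) :: ('k, 'a) mpoly_fs) z = of_int c"
    by (subst eval_single) (simp add: mono_ev_def)
  show ?thesis
    unfolding linf_def eval_diff e0 by (simp add: eval_sum eval_single mono_var int_dot_def)
qed

lemma hyp_of_vanish:
  fixes f :: "int ^ 'k::finite \<Rightarrow> 'a::field"
  assumes "\<And>i. \<exists>P :: ('k::finite, 'a::field) mpoly_fs. P \<noteq> 0 \<and> (\<forall>z. f z \<noteq> f (z + unit_vec i) \<longrightarrow> mpoly_eval P z = 0)"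
  shows "hypergeometric_term f"
  unfolding hypergeometric_term_def
proof
  fix i
  obtain P :: "('k, 'a) mpoly_fs" where P: "P \<noteq> 0" "\<And>z. f z \<noteq> f (z + unit_vec i) \<Longrightarrow> mpoly_eval P z = 0"
    using assms[of i] by blast
  show "\<exists>A B :: ('k, 'a) mpoly_fs. A \<noteq> 0 \<and> B \<noteq> 0 \<and> (\<forall>z. mpoly_eval A z * f z = mpoly_eval B z * f (z + unit_vec i))"
  proof (rule exI[of _ P], rule exI[of _ P], intro conjI allI)
    fix z
    show "mpoly_eval P z * f z = mpoly_eval P z * f (z + unit_vec i)"
    proof (cases "f z = f (z + unit_vec i)")
      case False thus ?thesis using P(2)[OF False] by simp
    qed simp
  qed (use P in auto)
qed

lemma region_H:
  assumes "polyhedral_region R"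
  obtains H where "finite H" "R = (\<Inter>(v, n)\<in>H. half_space v n)"
proof -
  from assms consider "R = UNIV" | "\<exists>H. finite H \<and> R = (\<Inter>(v, n)\<in>H. half_space v n)"
    unfolding polyhedral_region_def by blast
  thus ?thesis
  proof cases
    case 1 show ?thesis by (rule that[of "{}"]) (use 1 in auto)
  qed (use that in blast)
qed

theorem lemmaB20:
  fixes R :: "(int ^ 'k::finite) set"
  assumes "polyhedral_region R"
  shows "hypergeometric_term (char_fun R :: int ^ 'k \<Rightarrow> 'a::field)"
proof (rule hyp_of_vanish)
  fix i :: 'k
  obtain H where H: "finite H" "R = (\<Inter>(v, n)\<in>H. half_space v n)"
    using region_H[OF assms] .
  let ?f = "char_fun R :: int ^ 'k \<Rightarrow> 'a"
  show "\<exists>P :: ('k, 'a) mpoly_fs. P \<noteq> 0 \<and> (\<forall>z. ?f z \<noteq> ?f (z + unit_vec i) \<longrightarrow> mpoly_eval P z = 0)"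
  proof (cases "CHAR('a) = 0")
    case False
    hence p: "prime CHAR('a)" by (intro prime_CHAR_semidom) simp
    define P :: "('k, 'a) mpoly_fs" where
      "P = Poly_Mapping.single (Poly_Mapping.single i CHAR('a)) 1 - Poly_Mapping.single (Poly_Mapping.single i 1) 1"
    have ne: "Poly_Mapping.single i CHAR('a) \<noteq> Poly_Mapping.single i (1::nat)"
      using p by (metis lookup_single_eq not_prime_1)
    have "Poly_Mapping.lookup P (Poly_Mapping.single i CHAR('a)) = 1"
      unfolding P_def using ne by (simp add: lookup_minus lookup_single)
    hence "P \<noteq> 0" by auto
    moreover have "mpoly_eval P z = 0" for z
      unfolding P_def eval_diff eval_single mono_var using frob_int[OF p] by simp
    ultimately show ?thesis by blast
  next
    case True
    define G where "G = {(v, c). \<exists>n. (v, n) \<in> H \<and> v $ i \<noteq> 0 \<and> \<bar>c - n\<bar> \<le> \<bar>v $ i\<bar>}"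
    have finG: "finite G"
    proof (rule finite_subset)
      show "G \<subseteq> (\<Union>(v, n)\<in>H. {v} \<times> {n - \<bar>v $ i\<bar> .. n + \<bar>v $ i\<bar>})"
      proof
        fix x assume "x \<in> G"
        then obtain v c n where x: "x = (v, c)" "(v, n) \<in> H" "\<bar>c - n\<bar> \<le> \<bar>v $ i\<bar>"
          unfolding G_def by blast
        hence "c \<in> {n - \<bar>v $ i\<bar> .. n + \<bar>v $ i\<bar>}" by (simp add: abs_le_iff)
        thus "x \<in> (\<Union>(v, n)\<in>H. {v} \<times> {n - \<bar>v $ i\<bar> .. n + \<bar>v $ i\<bar>})"
          using x by blast
      qed
      show "finite (\<Union>(v, n)\<in>H. {v} \<times> {n - \<bar>v $ i\<bar> .. n + \<bar>v $ i\<bar>})"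
        using H(1) by auto
    qed
    define P :: "('k, 'a) mpoly_fs" where "P = (\<Prod>(v, c)\<in>G. linf v c)"
    have evP: "mpoly_eval P z = (\<Prod>(v, c)\<in>G. of_int (int_dot v z - c))" for z
      unfolding P_def using finG by (simp add: eval_prod case_prod_beta eval_linf)
    have oi: "(of_int x :: 'a) = 0 \<longleftrightarrow> x = 0" for x
      using True by (simp add: of_int_eq_0_iff_char_dvd)
    have oi2: "(of_int x :: 'a) = of_int y \<longleftrightarrow> x = y" for x y
      using oi[of "x - y"] by (simp del: of_int_eq_iff add: right_minus_eq)
    define t where "t = 1 + (\<Sum>(v, c)\<in>G. \<bar>c\<bar>)"
    define z0 :: "int ^ 'k" where "z0 = (\<chi> j. if j = i then t else 0)"
    have "int_dot v z0 - c \<noteq> 0" if "(v, c) \<in> G" for v c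
    proof -
      have dot: "int_dot v z0 = v $ i * t"
        unfolding int_dot_def z0_def by (simp add: if_distrib cong: if_cong)
      have "(\<lambda>(v,c). \<bar>c\<bar>) (v, c) \<le> (\<Sum>x\<in>G. (\<lambda>(v,c). \<bar>c\<bar>) x)"
        by (rule member_le_sum[OF that]) (auto simp: finG)
      hence "\<bar>c\<bar> \<le> (\<Sum>(v, c)\<in>G. \<bar>c\<bar>)" by simp
      hence "\<bar>c\<bar> < t" unfolding t_def by simp
      moreover have "v $ i \<noteq> 0" using that unfolding G_def by auto
      moreover have "t > 0" using \<open>\<bar>c\<bar> < t\<close> by simp
      ultimately have "\<bar>v $ i\<bar> \<ge> 1" "t > 0" by auto
      hence "1 * t \<le> \<bar>v $ i\<bar> * t" by (intro mult_right_mono) auto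
      hence "\<bar>c\<bar> < \<bar>v $ i\<bar> * t" using \<open>\<bar>c\<bar> < t\<close> by linarith
      hence "\<bar>c\<bar> < \<bar>v $ i * t\<bar>" using \<open>t > 0\<close> by (simp add: abs_mult)
      thus ?thesis using dot by auto
    qed
    hence "mpoly_eval P z0 \<noteq> 0"
      unfolding evP using finG by (auto simp: oi oi2)
    hence "P \<noteq> 0" by (auto simp: eval_0)
    moreover have "mpoly_eval P z = 0" if "?f z \<noteq> ?f (z + unit_vec i)" for z
    proof -
      from that have "(z \<in> R) \<noteq> (z + unit_vec i \<in> R)" by (auto simp: char_fun_def split: if_splits)
      then obtain v n where vn: "(v, n) \<in> H" "(int_dot v z > n) \<noteq> (int_dot v (z + unit_vec i) > n)"
        unfolding H(2) half_space_def by (fastforce simp: case_prod_beta)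
      hence "(v, int_dot v z) \<in> G"
        unfolding G_def int_dot_shift by auto
      thus ?thesis unfolding evP using finG
        by (intro prod_zero[OF finG] bexI[of _ "(v, int_dot v z)"]) simp_all
    qed
    ultimately show ?thesis by blast
  qed
qed

end
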